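(* Let $\omega_1\ne\omega_2$ be real, let $a$ be a real polynomial of degree $N-1\ge1$, and let $q_1,q_2,C_1,C_2\in\mathbb C$ satisfy, for all $t\in\mathbb R$, $$e^{-i\omega_1t}C_1+e^{-i\omega_2t}C_2=a\big(|q_1e^{-i\omega_1t}+q_2e^{-i\omega_2t}|^2\big)\big(q_1e^{-i\omega_1t}+q_2e^{-i\omega_2t}\big).$$ Then $q_1=0$ or $q_2=0$. *)

theory Defs
  imports "HOL-Analysis.Analysis" "HOL-Computational_Algebra.Polynomial"
begin

end

theory Submission
  imports Defs
begin

lemma circle_eq:
  fixes \<omega>1 \<omega>2 :: real and a :: "real poly" and q1 q2 C1 C2 z :: complex
  assumes ne: "\<omega>1 \<noteq> \<omega>2" and z: "cmod z = 1"
    and H: "\<And>t::real. exp (- \<i> * of_real (\<omega>1 * t)) * C1 + exp (- \<i> * of_real (\<omega>2 * t)) * C2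
          = of_real (poly a ((cmod (q1 * exp (- \<i> * of_real (\<omega>1 * t)) + q2 * exp (- \<i> * of_real (\<omega>2 * t))))\<^sup>2))
            * (q1 * exp (- \<i> * of_real (\<omega>1 * t)) + q2 * exp (- \<i> * of_real (\<omega>2 * t)))"
  shows "C1 + z * C2 = of_real (poly a ((cmod (q1 + q2 * z))\<^sup>2)) * (q1 + q2 * z)"
proof -
  define t where "t = Arg z / (\<omega>1 - \<omega>2)"
  define e1 where "e1 = exp (- \<i> * of_real (\<omega>1 * t))"
  have zz: "z = exp (\<i> * of_real ((\<omega>1 - \<omega>2) * t))"
    using ne z cis_Arg[of z] by (cases "z = 0", simp, auto simp: t_def cis_conv_exp sgn_div_norm)
  have e2: "exp (- \<i> * of_real (\<omega>2 * t)) = e1 * z"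
    unfolding e1_def zz by (simp add: exp_add[symmetric] algebra_simps)
  have ne1: "cmod e1 = 1" unfolding e1_def by (simp add: norm_exp_i_times[of "- (\<omega>1*t)", simplified])
  have "e1 * (C1 + z * C2) = e1 * (of_real (poly a ((cmod (q1 + q2 * z))\<^sup>2)) * (q1 + q2 * z))"
  proof -
    have "cmod (q1 * e1 + q2 * (e1 * z)) = cmod (q1 + q2 * z)"
    proof -
      have "q1 * e1 + q2 * (e1 * z) = e1 * (q1 + q2 * z)" by (simp add: algebra_simps)
      thus ?thesis by (simp add: norm_mult ne1)
    qed
    with H[of t] show ?thesis unfolding e2 e1_def[symmetric] by (simp add: algebra_simps)
  qed
  moreover have "e1 \<noteq> 0" using ne1 by auto
  ultimately show ?thesis by simp
qed

theorem mainTheorem3: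
  fixes \<omega>1 \<omega>2 :: real and N :: nat and a :: "real poly"
    and q1 q2 C1 C2 :: complex
  assumes "\<omega>1 \<noteq> \<omega>2"
    and "degree a = N - 1" and "N - 1 \<ge> 1"
    and "\<And>t::real. exp (- \<i> * of_real (\<omega>1 * t)) * C1 + exp (- \<i> * of_real (\<omega>2 * t)) * C2
          = of_real (poly a ((cmod (q1 * exp (- \<i> * of_real (\<omega>1 * t)) + q2 * exp (- \<i> * of_real (\<omega>2 * t))))\<^sup>2))
            * (q1 * exp (- \<i> * of_real (\<omega>1 * t)) + q2 * exp (- \<i> * of_real (\<omega>2 * t)))"
  shows "q1 = 0 \<or> q2 = 0"
proof (rule ccontr)
  assume "\<not> (q1 = 0 \<or> q2 = 0)"
  hence q1: "q1 \<noteq> 0" and q2: "q2 \<noteq> 0" by auto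
  define d where "d = degree a"
  have d1: "d \<ge> 1" using assms(2,3) by (simp add: d_def)
  define w where "w = q1 * cnj q2"
  define wb where "wb = cnj q1 * q2"
  define r where "r = q1 * cnj q1 + q2 * cnj q2"
  define S where "S = [:w, r, wb:]"
  define Q where "Q = (\<Sum>k\<le>d. smult (of_real (coeff a k)) (monom 1 (d-k) * S^k))"
  define L where "L = monom 1 d * [:C1, C2:]"
  define R where "R = Q * [:q1, q2:]"
  have eq: "poly L z = poly R z" if z: "cmod z = 1" for z
  proof -
    define g where "g = q1 + q2 * z"
    define x where "x = (cmod g)\<^sup>2"
    have ce: "C1 + z * C2 = of_real (poly a x) * g"
      using circle_eq[OF assms(1) z assms(4)] by (simp add: g_def x_def)
    have z0: "z \<noteq> 0" using z by auto
    have cz: "cnj z = 1 / z" using z complex_norm_square[of z] z0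
      by (simp add: field_simps)
    have sx: "z * of_real x = poly S z"
    proof -
      have "of_real x = g * cnj g" unfolding x_def by (rule complex_norm_square)
      also have "\<dots> = r + w / z + wb * z"
        unfolding g_def r_def w_def wb_def using z0 by (simp add: cz field_simps)
      finally show ?thesis using z0 by (simp add: S_def field_simps)
    qed
    have "poly Q z = (\<Sum>k\<le>d. of_real (coeff a k) * (z ^ (d-k) * (z * of_real x) ^ k))"
      by (simp add: Q_def poly_sum poly_monom sx)
    also have "\<dots> = (\<Sum>k\<le>d. z ^ d * (of_real (coeff a k) * (of_real x) ^ k))"
    proof (rule sum.cong)
      fix k assume "k \<in> {..d}"
      hence "z ^ d = z ^ (d-k) * z ^ k" by (simp add: power_add[symmetric])
      thus "of_real (coeff a k) * (z ^ (d-k) * (z * of_real x) ^ k) = z ^ d * (of_real (coeff a k) * (of_real x) ^ k)"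
        by (simp add: power_mult_distrib)
    qed simp
    also have "\<dots> = z ^ d * of_real (poly a x)"
      by (simp add: sum_distrib_left[symmetric] poly_altdef d_def)
    finally have "poly Q z = z ^ d * of_real (poly a x)" .
    moreover have "poly L z = z ^ d * (C1 + z * C2)" by (simp add: L_def poly_monom algebra_simps)
    moreover have "poly R z = poly Q z * g" by (simp add: R_def g_def algebra_simps)
    ultimately show ?thesis using ce by simp
  qed
  have LR: "L = R"
  proof (rule ccontr)
    assume "L \<noteq> R"
    hence "finite {z. poly (L - R) z = 0}" by (intro poly_roots_finite) simp
    hence "finite (Re ` {z. poly (L - R) z = 0})" by simp
    moreover have "{-1..1::real} \<subseteq> Re ` {z. poly (L - R) z = 0}"
    proof
      fix y :: real assume y: "y \<in> {-1..1}"
      define z where "z = Complex y (sqrt (1 - y\<^sup>2))"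
      have "y\<^sup>2 \<le> 1" using y by (auto simp add: abs_square_le_1)
      hence "cmod z = 1" by (simp add: z_def cmod_def)
      hence "poly (L - R) z = 0" using eq by simp
      thus "y \<in> Re ` {z. poly (L - R) z = 0}" by (force simp: z_def)
    qed
    ultimately have "finite {-1..1::real}" by (rule finite_subset[rotated])
    thus False using infinite_Icc[of "-1::real" 1] by simp
  qed
  have dL: "degree L \<le> d + 1"
  proof -
    have "degree [:C1, C2:] \<le> 1" by simp
    thus ?thesis
    unfolding L_def using degree_mult_le[of "monom (1::complex) d" "[:C1,C2:]"] degree_monom_le[of "1::complex" d]
    by linarith
  qed
  have wb0: "wb \<noteq> 0" using q1 q2 by (simp add: wb_def)
  have dS: "degree S = 2" using wb0 by (simp add: S_def)
  have dQ: "degree Q \<le> 2 * d"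
    unfolding Q_def
  proof (intro degree_sum_le)
    fix k assume k: "k \<in> {..d}"
    have "degree (monom (1::complex) (d-k) * S^k) \<le> (d-k) + 2 * k"
      using degree_mult_le[of "monom (1::complex) (d-k)" "S^k"] degree_monom_le[of "1::complex" "d-k"]
        degree_power_le[of S k] dS by (auto simp: mult.commute)
    thus "degree (smult (of_real (coeff a k)) (monom 1 (d-k) * S^k)) \<le> 2 * d"
      using k degree_smult_le[of "of_real (coeff a k)::complex" "monom 1 (d-k) * S^k"] by auto
  qed simp
  have cQ: "coeff Q (2 * d) = of_real (coeff a d) * wb ^ d"
  proof -
    have "coeff Q (2 * d) = (\<Sum>k\<le>d. of_real (coeff a k) * coeff (S ^ k) (d + k))"
      unfolding Q_def coeff_sum coeff_smult
      by (intro sum.cong refl) (auto simp: coeff_monom_mult)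
    also have "\<dots> = of_real (coeff a d) * coeff (S ^ d) (d + d) + (\<Sum>k\<in>{..d} - {d}. of_real (coeff a k) * coeff (S ^ k) (d + k))"
      by (rule sum.remove) auto
    also have "(\<Sum>k\<in>{..d} - {d}. of_real (coeff a k) * coeff (S ^ k) (d + k)) = 0"
    proof (rule sum.neutral, rule ballI)
      fix k assume "k \<in> {..d} - {d}"
      hence "k < d" by auto
      hence "degree (S ^ k) < d + k" using degree_power_le[of S k] dS by auto
      thus "of_real (coeff a k) * coeff (S ^ k) (d + k) = 0" by (simp add: coeff_eq_0)
    qed
    also have "coeff (S ^ d) (d + d) = wb ^ d"
    proof -
      have "S \<noteq> 0" using dS by auto
      hence "degree (S ^ d) = d + d" using degree_power_eq[of S d] dS by simp
      hence "coeff (S ^ d) (d + d) = lead_coeff (S ^ d)" by simp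
      also have "\<dots> = wb ^ d" by (simp add: lead_coeff_power dS) (simp add: S_def numeral_2_eq_2)
      finally show ?thesis .
    qed
    finally show ?thesis by (simp add: mult_2)
  qed
  have ad: "coeff a d \<noteq> 0" using d1 by (auto simp add: d_def)
  have Q0: "coeff Q (2 * d) \<noteq> 0" using cQ ad wb0 by simp
  hence dQ': "degree Q = 2 * d" using dQ by (simp add: le_antisym le_degree)
  have "degree R = 2 * d + 1"
    unfolding R_def using Q0 q2 dQ' by (subst degree_mult_eq) auto
  with dL LR d1 show False by simp
qed

end
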